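(* Assume conditions (C1) and (C2) stated in the context, and fix any $\varepsilon_0>0$. Then there exists a finite constant $\gamma_{\mathcal P,\varepsilon_0}>0$ such that for every pair $p,q\in\mathcal P$, \[ \mathcal G_p(R_q)\ge\varepsilon_0\ \Longrightarrow\ \mathcal L_p(R_q)-\mathcal L_p(R_p)\ge\gamma_{\mathcal P,\varepsilon_0}. \]
   Context: $\mathcal X$ is a measurable space with probability distribution $d_0$; $\mathcal A$ is a separable metric space; $\pi_0$ is a Markov kernel $\mathcal X\to\Delta(\mathcal A)$, $S_x:=\mathrm{supp}(\pi_0(\cdot\mid x))$ its topological support, $\|f\|_{\infty,\mathrm{supp}(\pi_0)}:=\sup\{|f(x,a)|:x\in\mathcal X,a\in S_x\}$. Rewards are measurable $R:\mathcal X\times\mathcal A\to\mathbb R$; $\pi_0$-centered means $\int R(x,a)\pi_0(da\mid x)=0$ for every $x$. A fixed measurable tie-breaking rule assigns to each reward $R$ a measurable $a_R$ with $a_R(x)\in\arg\max_{a\in S_x}R(x,a)$. $\mathcal P$ is a set; each $p$ induces a $\pi_0$-centered reward $R_p$; $\mathcal F_{\mathcal P}:=\{R_p:p\in\mathcal P\}$, $a_p:=a_{R_p}$. (C1) $\mathcal F_{\mathcal P}$ is compact under $\|\cdot\|_{\infty,\mathrm{supp}(\pi_0)}$, and every $R\in\mathcal F_{\mathcal P}$ has $a\mapsto R(x,a)$ continuous on $S_x$ for $d_0$-a.e. $x$. (C2) There is $\Delta^{\mathcal P}_{\min}>0$ such that for every $p$, $d_0$-a.s., $a_p(X)$ is the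 unique maximizer and $R_p(X,a_p(X))-\sup_{a\in S_X,a\neq a_p(X)}R_p(X,a)\ge\Delta^{\mathcal P}_{\min}$. Fix $K\ge2$; $\mathbf v_R(x,\mathbf a)=(R(x,a_1),\dots,R(x,a_K))$; $P_R(y=k\mid x,\mathbf a)=e^{R(x,a_k)}/\sum_\ell e^{R(x,a_\ell)}$; $\ell(\mathbf v,y)=\log\sum_ke^{v_k}-v_y$. $\mathcal L_p(R):=\mathbb E[\ell(\mathbf v_R(X,\mathbf A),Y)]$ with $X\sim d_0$, $\mathbf A\sim\pi_0(\cdot\mid X)^{\otimes K}$, $Y\sim P_{R_p}(\cdot\mid X,\mathbf A)$. $\mathcal G_p(R):=\mathbb E_{X\sim d_0}[R_p(X,a_p(X))-R_p(X,a_R(X))]$. *)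

theory Defs
  imports "HOL-Probability.Probability"
begin

definition supp :: "'a::topological_space measure \<Rightarrow> 'a set" where
  "supp M = {a. \<forall>U. open U \<longrightarrow> a \<in> U \<longrightarrow> emeasure M U > 0}"

definition supp_dist ::
  "'x measure \<Rightarrow> ('x \<Rightarrow> 'a::topological_space measure) \<Rightarrow>
   ('x \<Rightarrow> 'a \<Rightarrow> real) \<Rightarrow> ('x \<Rightarrow> 'a \<Rightarrow> real) \<Rightarrow> ereal" where
  "supp_dist d0 \<pi>0 f g =
     (SUP x\<in>space d0. SUP a\<in>supp (\<pi>0 x). ereal \<bar>f x a - g x a\<bar>)"

definition supp_open ::
  "'x measure \<Rightarrow> ('x \<Rightarrow> 'a::topological_space measure) \<Rightarrow>
   ('x \<Rightarrow> 'a \<Rightarrow> real) set \<Rightarrow> bool" where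
  "supp_open d0 \<pi>0 U \<longleftrightarrow>
     (\<forall>f\<in>U. \<exists>e>0. \<forall>g. supp_dist d0 \<pi>0 f g < ereal e \<longrightarrow> g \<in> U)"

definition supp_compact ::
  "'x measure \<Rightarrow> ('x \<Rightarrow> 'a::topological_space measure) \<Rightarrow>
   ('x \<Rightarrow> 'a \<Rightarrow> real) set \<Rightarrow> bool" where
  "supp_compact d0 \<pi>0 F \<longleftrightarrow>
     (\<forall>\<U>. (\<forall>U\<in>\<U>. supp_open d0 \<pi>0 U) \<and> F \<subseteq> \<Union>\<U> \<longrightarrow>
        (\<exists>\<V>\<subseteq>\<U>. finite \<V> \<and> F \<subseteq> \<Union>\<V>))"

definition is_reward :: "'x measure \<Rightarrow> ('x \<Rightarrow> 'a::topological_space \<Rightarrow> real) \<Rightarrow> bool" where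
  "is_reward d0 R \<longleftrightarrow> (\<lambda>(x, a). R x a) \<in> borel_measurable (d0 \<Otimes>\<^sub>M borel)"

definition centered ::
  "'x measure \<Rightarrow> ('x \<Rightarrow> 'a measure) \<Rightarrow> ('x \<Rightarrow> 'a \<Rightarrow> real) \<Rightarrow> bool" where
  "centered d0 \<pi>0 R \<longleftrightarrow>
     (\<forall>x\<in>space d0. integrable (\<pi>0 x) (R x) \<and> (\<integral>a. R x a \<partial>\<pi>0 x) = 0)"

definition is_argmax_on :: "'a set \<Rightarrow> ('a \<Rightarrow> real) \<Rightarrow> 'a \<Rightarrow> bool" where
  "is_argmax_on S f a \<longleftrightarrow> a \<in> S \<and> (\<forall>b\<in>S. f b \<le> f a)"

definition softmax_prob :: "nat \<Rightarrow> (nat \<Rightarrow> real) \<Rightarrow> nat \<Rightarrow> real" where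
  "softmax_prob K v k = exp (v k) / (\<Sum>l<K. exp (v l))"

definition ce_loss :: "nat \<Rightarrow> (nat \<Rightarrow> real) \<Rightarrow> nat \<Rightarrow> real" where
  "ce_loss K v y = ln (\<Sum>k<K. exp (v k)) - v y"

(* L_p(R) with R_p = Rtrue: E_{X~d0, A~pi0(.|X)^{\<otimes>K}, Y~P_{Rtrue}} [ l(v_R(X,A), Y) ];
   the loss is nonnegative, so the expectation is taken in [0, \<infinity>] *)
definition pref_loss ::
  "'x measure \<Rightarrow> ('x \<Rightarrow> 'a measure) \<Rightarrow> nat \<Rightarrow>
   ('x \<Rightarrow> 'a \<Rightarrow> real) \<Rightarrow> ('x \<Rightarrow> 'a \<Rightarrow> real) \<Rightarrow> ennreal" where
  "pref_loss d0 \<pi>0 K Rtrue R =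
     (\<integral>\<^sup>+ x. (\<integral>\<^sup>+ A. ennreal (\<Sum>k<K. softmax_prob K (\<lambda>i. Rtrue x (A i)) k
                                     * ce_loss K (\<lambda>i. R x (A i)) k)
              \<partial>(PiM {..<K} (\<lambda>_. \<pi>0 x))) \<partial>d0)"

(* G_p(R) = E_{X~d0}[R_p(X, a_p(X)) - R_p(X, a_R(X))], with a_R = tb R;
   the integrand is nonnegative, so the expectation is taken in [0, \<infinity>] *)
definition subopt_gap ::
  "'x measure \<Rightarrow> (('x \<Rightarrow> 'a \<Rightarrow> real) \<Rightarrow> 'x \<Rightarrow> 'a) \<Rightarrow>
   ('x \<Rightarrow> 'a \<Rightarrow> real) \<Rightarrow> ('x \<Rightarrow> 'a \<Rightarrow> real) \<Rightarrow> ennreal" where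
  "subopt_gap d0 tb Rtrue R =
     (\<integral>\<^sup>+ x. ennreal (Rtrue x (tb Rtrue x) - Rtrue x (tb R x)) \<partial>d0)"

end

theory Submission
  imports Defs
begin



definition SS :: "nat \<Rightarrow> (nat\<Rightarrow>real) \<Rightarrow> (nat\<Rightarrow>real) \<Rightarrow> real" where
  "SS K v w = (\<Sum>k<K. softmax_prob K v k * ce_loss K w k)"

lemma Z_pos: "(K::nat) > 0 \<Longrightarrow> (\<Sum>l<K. exp (v l)) > (0::real)"
  by (intro sum_pos) auto

lemma softmax_pos: "K > 0 \<Longrightarrow> softmax_prob K v k > 0"
  unfolding softmax_prob_def using Z_pos[of K v] by simp

lemma softmax_sum: "K > 0 \<Longrightarrow> (\<Sum>k<K. softmax_prob K v k) = 1"
  unfolding softmax_prob_def using Z_pos[of K v] by (simp add: sum_divide_distrib[symmetric])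

lemma ce_nonneg: "k < K \<Longrightarrow> ce_loss K w k \<ge> 0"
proof -
  assume k: "k < K"
  have "exp (w k) \<le> (\<Sum>l<K. exp (w l))"
    using k by (intro member_le_sum) auto
  then have "w k \<le> ln (\<Sum>l<K. exp (w l))"
    using ln_ge_iff[of "\<Sum>l<K. exp (w l)" "w k"] Z_pos[of K w] k by simp
  then show ?thesis unfolding ce_loss_def by simp
qed

lemma SS_nonneg: "SS K v w \<ge> 0"
  unfolding SS_def
  by (intro sum_nonneg mult_nonneg_nonneg) (auto simp: softmax_prob_def intro!: ce_nonneg divide_nonneg_nonneg sum_nonneg)

lemma exp_gt_add_one: "(x::real) \<noteq> 0 \<Longrightarrow> 1 + x < exp x"
proof (cases "x < -2")
  case True then show ?thesis using exp_gt_zero[of x] by linarith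
next
  case False
  assume x: "x \<noteq> 0"
  have a: "0 \<le> 1 + x/2" using False by simp
  have "(1 + x/2)^2 \<le> exp (x/2) ^ 2"
    using a exp_ge_add_one_self[of "x/2"] by (intro power_mono) auto
  also have "exp (x/2) ^ 2 = exp x" by (simp add: power2_eq_square exp_add[symmetric])
  finally have "(1 + x/2)^2 \<le> exp x" .
  moreover have "0 < x * x" using x by (cases "x > 0") (auto simp: mult_neg_neg)
  then have "1 + x < (1 + x/2)^2" by (simp add: power2_eq_square algebra_simps)
  ultimately show ?thesis by simp
qed

lemma SS_diff:
  assumes K: "K > 0"
  shows "SS K v w - SS K v v = ln (\<Sum>k<K. softmax_prob K v k * exp (w k - v k))
            - (\<Sum>k<K. softmax_prob K v k * (w k - v k))"
proof -
  define Zv where "Zv = (\<Sum>l<K. exp (v l))"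
  define Zw where "Zw = (\<Sum>l<K. exp (w l))"
  have Zv: "Zv > 0" "Zw > 0" unfolding Zv_def Zw_def using Z_pos K by auto
  have e1: "(\<Sum>k<K. softmax_prob K v k * exp (w k - v k)) = Zw / Zv"
    unfolding softmax_prob_def Zw_def Zv_def[symmetric]
    by (simp add: exp_diff sum_divide_distrib[symmetric])
  have "SS K v w - SS K v v = (\<Sum>k<K. softmax_prob K v k * (ce_loss K w k - ce_loss K v k))"
    unfolding SS_def by (simp add: sum_subtractf right_diff_distrib)
  also have "\<dots> = (\<Sum>k<K. softmax_prob K v k * ((ln Zw - ln Zv) - (w k - v k)))"
    unfolding ce_loss_def Zw_def Zv_def by (intro sum.cong refl) (simp add: algebra_simps)
  also have "\<dots> = (ln Zw - ln Zv) * (\<Sum>k<K. softmax_prob K v k) - (\<Sum>k<K. softmax_prob K v k * (w k - v k))"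
    by (simp add: sum_subtractf right_diff_distrib sum_distrib_left mult.commute)
  also have "\<dots> = ln (Zw / Zv) - (\<Sum>k<K. softmax_prob K v k * (w k - v k))"
    using softmax_sum[OF K] Zv by (simp add: ln_div)
  finally show ?thesis using e1 by simp
qed

lemma jensen_exp:
  fixes s d :: "nat \<Rightarrow> real"
  assumes "\<And>k. k < K \<Longrightarrow> s k > 0" "(\<Sum>k<K. s k) = 1"
  shows "exp (\<Sum>k<K. s k * d k) \<le> (\<Sum>k<K. s k * exp (d k))"
    and "i < K \<Longrightarrow> j < K \<Longrightarrow> d i \<noteq> d j \<Longrightarrow> exp (\<Sum>k<K. s k * d k) < (\<Sum>k<K. s k * exp (d k))"
proof -
  define m where "m = (\<Sum>k<K. s k * d k)"
  have key: "s k * exp (d k) \<ge> s k * (exp m * (1 + (d k - m)))" if "k < K" for k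
  proof -
    have "exp (d k) = exp m * exp (d k - m)" by (simp add: exp_diff)
    also have "\<dots> \<ge> exp m * (1 + (d k - m))" using exp_ge_add_one_self[of "d k - m"] by simp
    finally show ?thesis using assms(1)[OF that] by simp
  qed
  have sumeq: "(\<Sum>k<K. s k * (exp m * (1 + (d k - m)))) = exp m"
  proof -
    have "(\<Sum>k<K. s k * (exp m * (1 + (d k - m)))) = exp m * ((\<Sum>k<K. s k) + (\<Sum>k<K. s k * d k) - m * (\<Sum>k<K. s k))"
      by (simp add: algebra_simps sum.distrib sum_subtractf sum_distrib_left sum_distrib_right)
    then show ?thesis using assms(2) m_def by simp
  qed
  show "exp (\<Sum>k<K. s k * d k) \<le> (\<Sum>k<K. s k * exp (d k))"
    using sum_mono[of "{..<K}" "\<lambda>k. s k * (exp m * (1 + (d k - m)))" "\<lambda>k. s k * exp (d k)"] key sumeq m_def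
    by simp
  assume ij: "i < K" "j < K" "d i \<noteq> d j"
  then obtain l where l: "l < K" "d l \<noteq> m" by (cases "d i = m") auto
  have strict: "s l * exp (d l) > s l * (exp m * (1 + (d l - m)))"
  proof -
    have "exp (d l - m) > 1 + (d l - m)" using exp_gt_add_one[of "d l - m"] l by auto
    then have "exp m * exp (d l - m) > exp m * (1 + (d l - m))" by simp
    then show ?thesis using assms(1)[OF l(1)] by (simp add: exp_diff)
  qed
  have "(\<Sum>k<K. s k * (exp m * (1 + (d k - m)))) < (\<Sum>k<K. s k * exp (d k))"
    by (rule sum_strict_mono_ex1) (use key strict l in auto)
  then show "exp (\<Sum>k<K. s k * d k) < (\<Sum>k<K. s k * exp (d k))" using sumeq m_def by simp
qed

lemma lt_ln: "exp (a::real) < X \<Longrightarrow> a < ln X"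
proof -
  assume h: "exp a < X"
  then have X: "X > 0" using exp_gt_zero[of a] by linarith
  have "ln (exp a) < ln X" using h X by (subst ln_less_cancel_iff) auto
  then show ?thesis by simp
qed

lemma gibbs:
  assumes K: "K > 0"
  shows "SS K v v \<le> SS K v w"
proof -
  let ?s = "softmax_prob K v" and ?d = "\<lambda>k. w k - v k"
  have "exp (\<Sum>k<K. ?s k * ?d k) \<le> (\<Sum>k<K. ?s k * exp (?d k))"
    by (rule jensen_exp(1)) (use softmax_pos softmax_sum K in auto)
  then have "(\<Sum>k<K. ?s k * ?d k) \<le> ln (\<Sum>k<K. ?s k * exp (?d k))"
    using ln_ge_iff[of "\<Sum>k<K. ?s k * exp (?d k)" "\<Sum>k<K. ?s k * ?d k"] exp_gt_zero order_less_le_trans by blast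
  then show ?thesis using SS_diff[OF K, where v=v and w=w] by simp
qed

lemma gibbs_strict:
  assumes K: "K > 0" and ij: "i < K" "j < K" "w i - v i \<noteq> w j - v j"
  shows "SS K v v < SS K v w"
proof -
  let ?s = "softmax_prob K v" and ?d = "\<lambda>k. w k - v k"
  have "exp (\<Sum>k<K. ?s k * ?d k) < (\<Sum>k<K. ?s k * exp (?d k))"
    by (rule jensen_exp(2)[OF _ _ ij]) (use softmax_pos softmax_sum K in auto)
  then have "(\<Sum>k<K. ?s k * ?d k) < ln (\<Sum>k<K. ?s k * exp (?d k))"
    by (rule lt_ln)
  then show ?thesis using SS_diff[OF K, where v=v and w=w] by simp
qed

lemma SS_le_lnK:
  assumes K: "K > 0"
  shows "SS K v v \<le> ln K"
proof -
  have "SS K v (\<lambda>_. 0) = ln K"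
    unfolding SS_def ce_loss_def using softmax_sum[OF K, of v] by (simp add: sum_distrib_right[symmetric])
  then show ?thesis using gibbs[OF K, of v "\<lambda>_. 0"] by simp
qed




lemma Z_bound:
  fixes K :: nat and r :: real and v v' :: "nat \<Rightarrow> real"
  assumes "\<And>k. k < K \<Longrightarrow> \<bar>v' k - v k\<bar> \<le> r"
  shows "(\<Sum>l<K. exp (v' l)) \<le> exp r * (\<Sum>l<K. exp (v l))"
proof -
  have "(\<Sum>l<K. exp (v' l)) \<le> (\<Sum>l<K. exp r * exp (v l))"
  proof (intro sum_mono)
    fix l assume "l \<in> {..<K}"
    then have "v' l \<le> r + v l" using assms[of l] by auto
    then show "exp (v' l) \<le> exp r * exp (v l)" by (simp add: exp_add[symmetric])
  qed
  then show ?thesis by (simp add: sum_distrib_left)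
qed

lemma softmax_lower:
  fixes K :: nat and r :: real
  assumes K: "K > 0" and k: "k < K" and h: "\<And>k. k < K \<Longrightarrow> \<bar>v' k - v k\<bar> \<le> r"
  shows "exp (-2*r) * softmax_prob K v k \<le> softmax_prob K v' k"
proof -
  have Z: "(\<Sum>l<K. exp (v' l)) \<le> exp r * (\<Sum>l<K. exp (v l))" by (rule Z_bound) (use h in auto)
  have Zp: "(\<Sum>l<K. exp (v' l)) > 0" "(\<Sum>l<K. exp (v l)) > 0" using Z_pos K by auto
  have e: "exp (-r) * exp (v k) \<le> exp (v' k)"
    using h[OF k] by (simp add: exp_add[symmetric])
  have "exp (-2*r) * softmax_prob K v k = (exp (-r) * exp (v k)) / (exp r * (\<Sum>l<K. exp (v l)))"
    unfolding softmax_prob_def by (simp add: exp_add[symmetric] exp_minus field_simps)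
  also have "\<dots> \<le> exp (v' k) / (\<Sum>l<K. exp (v' l))"
    using e Z Zp by (intro frac_le) auto
  finally show ?thesis unfolding softmax_prob_def .
qed

lemma softmax_upper:
  fixes K :: nat and r :: real
  assumes K: "K > 0" and k: "k < K" and h: "\<And>k. k < K \<Longrightarrow> \<bar>v' k - v k\<bar> \<le> r"
  shows "softmax_prob K v' k \<le> exp (2*r) * softmax_prob K v k"
proof -
  have "exp (-2*r) * softmax_prob K v' k \<le> softmax_prob K v k"
    by (rule softmax_lower[OF K k]) (use h in \<open>auto simp: abs_minus_commute\<close>)
  then have "exp (2*r) * (exp (-2*r) * softmax_prob K v' k) \<le> exp (2*r) * softmax_prob K v k"
    by simp
  then show ?thesis by (simp add: exp_minus field_simps)
qed

lemma lse_bound: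
  fixes K :: nat and r :: real
  assumes K: "K > 0" and h: "\<And>k. k < K \<Longrightarrow> \<bar>v' k - v k\<bar> \<le> r"
  shows "ln (\<Sum>l<K. exp (v' l)) \<le> r + ln (\<Sum>l<K. exp (v l))"
proof -
  have Z: "(\<Sum>l<K. exp (v' l)) \<le> exp r * (\<Sum>l<K. exp (v l))" by (rule Z_bound) (use h in auto)
  have Zp: "(\<Sum>l<K. exp (v' l)) > 0" "(\<Sum>l<K. exp (v l)) > 0" using Z_pos K by auto
  have "ln (\<Sum>l<K. exp (v' l)) \<le> ln (exp r * (\<Sum>l<K. exp (v l)))"
    using Z Zp by (subst ln_le_cancel_iff) auto
  also have "\<dots> = r + ln (\<Sum>l<K. exp (v l))" using Zp by (simp add: ln_mult)
  finally show ?thesis .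
qed

lemma ce_bound:
  fixes K :: nat and r :: real
  assumes K: "K > 0" and k: "k < K" and h: "\<And>k. k < K \<Longrightarrow> \<bar>w' k - w k\<bar> \<le> r"
  shows "\<bar>ce_loss K w' k - ce_loss K w k\<bar> \<le> 2 * r"
proof -
  have a: "ln (\<Sum>l<K. exp (w' l)) \<le> r + ln (\<Sum>l<K. exp (w l))" by (rule lse_bound[OF K h])
  have b: "ln (\<Sum>l<K. exp (w l)) \<le> r + ln (\<Sum>l<K. exp (w' l))"
    by (rule lse_bound[OF K]) (use h in \<open>auto simp: abs_minus_commute\<close>)
  show ?thesis using a b h[OF k] unfolding ce_loss_def by (auto simp: abs_le_iff)
qed

lemma SS_perturb:
  fixes K :: nat and r :: real
  assumes K: "K > 0" and r: "r \<ge> 0"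
    and hv: "\<And>k. k < K \<Longrightarrow> \<bar>v' k - v k\<bar> \<le> r"
    and hw: "\<And>k. k < K \<Longrightarrow> \<bar>w' k - w k\<bar> \<le> r"
  shows "exp (-2*r) * SS K v w \<le> SS K v' w' + 2*r"
    and "SS K v' w' \<le> exp (2*r) * SS K v w + 2*r"
proof -
  let ?s = "softmax_prob K v" and ?s' = "softmax_prob K v'"
  have cb: "\<bar>ce_loss K w' k - ce_loss K w k\<bar> \<le> 2 * r" if "k < K" for k
    by (rule ce_bound[OF K that hw])
  have cb1: "ce_loss K w k \<le> ce_loss K w' k + 2*r" if "k < K" for k
    using cb[OF that] by (simp add: abs_le_iff)
  have cb2: "ce_loss K w' k \<le> ce_loss K w k + 2*r" if "k < K" for k
    using cb[OF that] by (simp add: abs_le_iff)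
  have sp: "0 \<le> ?s' k" for k using softmax_pos[OF K, of v' k] by simp
  have "exp (-2*r) * SS K v w = (\<Sum>k<K. (exp (-2*r) * ?s k) * ce_loss K w k)"
    unfolding SS_def by (simp add: sum_distrib_left mult.assoc)
  also have "\<dots> \<le> (\<Sum>k<K. ?s' k * ce_loss K w k)"
    by (intro sum_mono mult_right_mono softmax_lower[OF K _ hv] ce_nonneg) auto
  also have "\<dots> \<le> (\<Sum>k<K. ?s' k * (ce_loss K w' k + 2*r))"
    using cb1 sp by (intro sum_mono mult_left_mono) auto
  also have "\<dots> = SS K v' w' + 2*r * (\<Sum>k<K. ?s' k)"
    unfolding SS_def by (simp add: distrib_left sum.distrib sum_distrib_left mult.commute)
  also have "\<dots> = SS K v' w' + 2*r" using softmax_sum[OF K] by simp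
  finally show "exp (-2*r) * SS K v w \<le> SS K v' w' + 2*r" .
  have "SS K v' w' = (\<Sum>k<K. ?s' k * ce_loss K w' k)" unfolding SS_def ..
  also have "\<dots> \<le> (\<Sum>k<K. ?s' k * (ce_loss K w k + 2*r))"
    using cb2 sp by (intro sum_mono mult_left_mono) auto
  also have "\<dots> = (\<Sum>k<K. ?s' k * ce_loss K w k) + 2*r * (\<Sum>k<K. ?s' k)"
    by (simp add: distrib_left sum.distrib sum_distrib_left mult.commute)
  also have "\<dots> = (\<Sum>k<K. ?s' k * ce_loss K w k) + 2*r" using softmax_sum[OF K] by simp
  also have "(\<Sum>k<K. ?s' k * ce_loss K w k) \<le> (\<Sum>k<K. (exp (2*r) * ?s k) * ce_loss K w k)"
    by (intro sum_mono mult_right_mono softmax_upper[OF K _ hv] ce_nonneg) auto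
  also have "\<dots> = exp (2*r) * SS K v w"
    unfolding SS_def by (simp add: sum_distrib_left mult.assoc)
  finally show "SS K v' w' \<le> exp (2*r) * SS K v w + 2*r" by simp
qed




lemma supp_open_compl: "open (- supp M)"
proof (subst open_subopen, intro ballI)
  fix a assume "a \<in> - supp M"
  then obtain U where U: "open U" "a \<in> U" "\<not> emeasure M U > 0" unfolding supp_def by auto
  have "U \<subseteq> - supp M" using U unfolding supp_def by auto
  then show "\<exists>T. open T \<and> a \<in> T \<and> T \<subseteq> - supp M" using U by auto
qed

lemma supp_closed: "closed (supp M)"
  using supp_open_compl[of M] by (simp add: closed_def)

lemma supp_sets:
  assumes "sets M = sets (borel :: 'a::topological_space measure)"
  shows "supp M \<in> sets M" "- supp M \<in> sets M"
  using assms supp_closed[of M] supp_open_compl[of M] by auto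

lemma supp_null:
  fixes M :: "'a::second_countable_topology measure"
  assumes sM: "sets M = sets borel"
  shows "- supp M \<in> null_sets M"
proof -
  obtain B :: "'a set set" where B: "countable B" "topological_basis B" using ex_countable_basis by auto
  let ?N = "\<Union>b\<in>{b\<in>B. emeasure M b = 0}. b"
  have Bopen: "open b" if "b \<in> B" for b using B(2) that by (rule topological_basis_open)
  have N: "?N \<in> null_sets M"
  proof (rule null_sets_UN')
    show "countable {b\<in>B. emeasure M b = 0}" using B(1) by auto
    fix b assume "b \<in> {b\<in>B. emeasure M b = 0}"
    then show "b \<in> null_sets M" using Bopen sM by (auto simp: null_sets_def)
  qed
  have sub: "- supp M \<subseteq> ?N"
  proof
    fix a assume "a \<in> - supp M"
    then obtain U where U: "open U" "a \<in> U" "\<not> emeasure M U > 0" unfolding supp_def by auto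
    obtain b where b: "b \<in> B" "a \<in> b" "b \<subseteq> U" using topological_basisE[OF B(2) U(1,2)] by blast
    have "emeasure M b \<le> emeasure M U"
      using b Bopen U sM by (intro emeasure_mono) auto
    then have "emeasure M b = 0" using U(3) by (simp add: not_gr_zero) 
    then show "a \<in> ?N" using b by auto
  qed
  show ?thesis using null_sets_subset[OF N supp_sets(2)[OF sM] sub] .
qed

lemma AE_supp:
  fixes M :: "'a::second_countable_topology measure"
  assumes sM: "sets M = sets borel"
  shows "AE a in M. a \<in> supp M"
  by (rule AE_I'[OF supp_null[OF sM]]) auto

lemma emeasure_inter_supp:
  fixes M :: "'a::second_countable_topology measure"
  assumes sM: "sets M = sets borel" and U: "U \<in> sets M"
  shows "emeasure M (U \<inter> supp M) = emeasure M U"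
proof -
  have "emeasure M U = emeasure M (U \<inter> supp M)"
    using AE_supp[OF sM] U supp_sets[OF sM]
    by (intro emeasure_eq_AE) auto
  then show ?thesis by simp
qed

lemma AE_PiM_supp:
  fixes M :: "'a::second_countable_topology measure" and K :: nat
  assumes sM: "sets M = sets borel" and P: "prob_space M"
  shows "AE A in PiM {..<K} (\<lambda>_. M). \<forall>i\<in>{..<K}. A i \<in> supp M"
proof (rule AE_finite_allI)
  fix i assume "i \<in> {..<K}"
  then show "AE A in PiM {..<K} (\<lambda>_. M). A i \<in> supp M"
    using AE_PiM_component[of "{..<K}" "\<lambda>_. M" i "\<lambda>a. a \<in> supp M"] AE_supp[OF sM] P by auto
qed simp

lemma kernel_PiM:
  fixes \<pi>0 :: "'x \<Rightarrow> 'a::topological_space measure" and K :: nat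
  assumes k: "\<pi>0 \<in> d0 \<rightarrow>\<^sub>M prob_algebra borel"
  shows "(\<lambda>x. PiM {..<K} (\<lambda>_. \<pi>0 x)) \<in> d0 \<rightarrow>\<^sub>M subprob_algebra (PiM {..<K} (\<lambda>_. borel))"
proof (rule measurable_prob_algebraD, rule measurable_prob_algebra_generated[OF sets_PiM Int_stable_prod_algebra prod_algebra_sets_into_space])
  have sp: "x \<in> space d0 \<Longrightarrow> sets (\<pi>0 x) = sets borel \<and> prob_space (\<pi>0 x)" for x
    using measurable_space[OF k] by (auto simp: space_prob_algebra)
  fix x assume x: "x \<in> space d0"
  show "prob_space (PiM {..<K} (\<lambda>_. \<pi>0 x))" using sp[OF x] by (intro prob_space_PiM) auto
  show "sets (PiM {..<K} (\<lambda>_. \<pi>0 x)) = sets (PiM {..<K} (\<lambda>_. borel))"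
    using sp[OF x] by (intro sets_PiM_cong) auto
next
  have sp: "x \<in> space d0 \<Longrightarrow> sets (\<pi>0 x) = sets borel \<and> prob_space (\<pi>0 x)" for x
    using measurable_space[OF k] by (auto simp: space_prob_algebra)
  have k': "\<pi>0 \<in> d0 \<rightarrow>\<^sub>M subprob_algebra borel" using k by (rule measurable_prob_algebraD)
  fix A :: "(nat \<Rightarrow> 'a) set" assume A: "A \<in> prod_algebra {..<K} (\<lambda>_. borel)"
  then obtain E where E: "A = Pi\<^sub>E {..<K} E" "E \<in> (\<Pi> i\<in>{..<K}. sets (borel::'a measure))"
    by (rule prod_algebraE_all)
  have eq: "emeasure (PiM {..<K} (\<lambda>_. \<pi>0 x)) A = (\<Prod>i\<in>{..<K}. emeasure (\<pi>0 x) (E i))"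
    if x: "x \<in> space d0" for x
  proof -
    interpret prob_space "\<pi>0 x" using sp[OF x] by auto
    interpret product_sigma_finite "\<lambda>_. \<pi>0 x" by standard
    show ?thesis unfolding E(1) using E(2) sp[OF x] by (intro emeasure_PiM) auto
  qed
  have "(\<lambda>x. \<Prod>i\<in>{..<K}. emeasure (\<pi>0 x) (E i)) \<in> borel_measurable d0"
    using E(2) by (intro borel_measurable_prod_ennreal measurable_emeasure_kernel[OF k']) auto
  then show "(\<lambda>x. emeasure (PiM {..<K} (\<lambda>_. \<pi>0 x)) A) \<in> borel_measurable d0"
    by (rule measurable_cong[THEN iffD1, rotated]) (use eq in auto)
qed




locale L3 =
  fixes d0 :: "'x measure"
    and \<pi>0 :: "'x \<Rightarrow> 'a::{metric_space, second_countable_topology} measure"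
    and F :: "('x \<Rightarrow> 'a \<Rightarrow> real) set"
    and tb :: "('x \<Rightarrow> 'a \<Rightarrow> real) \<Rightarrow> 'x \<Rightarrow> 'a"
    and K :: nat
    and \<Delta> :: real
  assumes d0: "prob_space d0"
    and kernel: "\<pi>0 \<in> d0 \<rightarrow>\<^sub>M prob_algebra borel"
    and meas: "\<And>f. f \<in> F \<Longrightarrow> is_reward d0 f"
    and tb_meas: "\<And>f. f \<in> F \<Longrightarrow> tb f \<in> d0 \<rightarrow>\<^sub>M borel"
    and tb_max: "\<And>f x. f \<in> F \<Longrightarrow> x \<in> space d0 \<Longrightarrow> is_argmax_on (supp (\<pi>0 x)) (f x) (tb f x)"
    and cont: "\<And>f. f \<in> F \<Longrightarrow> AE x in d0. continuous_on (supp (\<pi>0 x)) (f x)"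
    and Delta: "\<Delta> > 0"
    and margin: "\<And>f. f \<in> F \<Longrightarrow> AE x in d0. (\<forall>b\<in>supp (\<pi>0 x). b \<noteq> tb f x \<longrightarrow> f x b \<le> f x (tb f x) - \<Delta>)"
    and K: "K \<ge> 2"
begin

definition II :: "('x \<Rightarrow> 'a \<Rightarrow> real) \<Rightarrow> ('x \<Rightarrow> 'a \<Rightarrow> real) \<Rightarrow> 'x \<Rightarrow> ennreal" where
  "II f g x = (\<integral>\<^sup>+ A. ennreal (SS K (\<lambda>i. f x (A i)) (\<lambda>i. g x (A i))) \<partial>(PiM {..<K} (\<lambda>_. \<pi>0 x)))"

lemma pref_loss_eq: "pref_loss d0 \<pi>0 K f g = (\<integral>\<^sup>+ x. II f g x \<partial>d0)"
  unfolding pref_loss_def II_def SS_def ..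

lemma K0: "K > 0" using K by simp

lemma sp: "x \<in> space d0 \<Longrightarrow> sets (\<pi>0 x) = sets borel" "x \<in> space d0 \<Longrightarrow> prob_space (\<pi>0 x)"
  using measurable_space[OF kernel] by (auto simp: space_prob_algebra)

lemma prob_PiM: "x \<in> space d0 \<Longrightarrow> prob_space (PiM {..<K} (\<lambda>_. \<pi>0 x))"
  using sp by (intro prob_space_PiM) auto

lemma joint_meas:
  assumes f: "f \<in> F" and i: "i \<in> {..<K}"
  shows "(\<lambda>(x, A). f x (A i)) \<in> borel_measurable (d0 \<Otimes>\<^sub>M PiM {..<K} (\<lambda>_. borel))"
proof -
  have [measurable]: "(\<lambda>(x, a). f x a) \<in> borel_measurable (d0 \<Otimes>\<^sub>M borel)"
    using meas[OF f] unfolding is_reward_def .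
  have "(\<lambda>(x, A). (x, A i)) \<in> (d0 \<Otimes>\<^sub>M PiM {..<K} (\<lambda>_. borel)) \<rightarrow>\<^sub>M (d0 \<Otimes>\<^sub>M borel)"
    using i by measurable
  from measurable_compose[OF this \<open>(\<lambda>(x, a). f x a) \<in> _\<close>] show ?thesis
    by (simp add: case_prod_beta comp_def)
qed

lemma SS_joint_meas:
  assumes f: "f \<in> F" and g: "g \<in> F"
  shows "(\<lambda>(x, A). ennreal (SS K (\<lambda>i. f x (A i)) (\<lambda>i. g x (A i)))) \<in> borel_measurable (d0 \<Otimes>\<^sub>M PiM {..<K} (\<lambda>_. borel))"
proof -
  note [measurable] = joint_meas[OF f] joint_meas[OF g]
  show ?thesis unfolding SS_def softmax_prob_def ce_loss_def by measurable
qed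

lemma II_meas:
  assumes f: "f \<in> F" and g: "g \<in> F"
  shows "II f g \<in> borel_measurable d0"
  unfolding II_def
  using nn_integral_measurable_subprob_algebra2[OF SS_joint_meas[OF f g] kernel_PiM[OF kernel]] by simp

lemma dist_lt:
  assumes "supp_dist d0 \<pi>0 f g < ereal r" "x \<in> space d0" "a \<in> supp (\<pi>0 x)"
  shows "\<bar>f x a - g x a\<bar> < r"
proof -
  have "ereal \<bar>f x a - g x a\<bar> \<le> (SUP a\<in>supp (\<pi>0 x). ereal \<bar>f x a - g x a\<bar>)"
    using assms(3) by (rule SUP_upper)
  also have "\<dots> \<le> supp_dist d0 \<pi>0 f g"
    unfolding supp_dist_def using assms(2) by (rule SUP_upper)
  finally have "ereal \<bar>f x a - g x a\<bar> < ereal r" using assms(1) by (rule order_le_less_trans)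
  then show ?thesis by simp
qed

lemma dist_sym: "supp_dist d0 \<pi>0 f g = supp_dist d0 \<pi>0 g f"
  unfolding supp_dist_def by (simp add: abs_minus_commute)

lemma dist_triangle: "supp_dist d0 \<pi>0 f h \<le> supp_dist d0 \<pi>0 f g + supp_dist d0 \<pi>0 g h"
  unfolding supp_dist_def
proof (intro SUP_least)
  fix x a assume x: "x \<in> space d0" and a: "a \<in> supp (\<pi>0 x)"
  have "ereal \<bar>f x a - h x a\<bar> \<le> ereal \<bar>f x a - g x a\<bar> + ereal \<bar>g x a - h x a\<bar>"
    by simp
  also have "\<dots> \<le> (SUP x\<in>space d0. SUP a\<in>supp (\<pi>0 x). ereal \<bar>f x a - g x a\<bar>) + (SUP x\<in>space d0. SUP a\<in>supp (\<pi>0 x). ereal \<bar>g x a - h x a\<bar>)"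
    by (intro add_mono SUP_upper2[OF x] SUP_upper[OF a] order_refl)
  finally show "ereal \<bar>f x a - h x a\<bar> \<le> (SUP x\<in>space d0. SUP a\<in>supp (\<pi>0 x). ereal \<bar>f x a - g x a\<bar>) + (SUP x\<in>space d0. SUP a\<in>supp (\<pi>0 x). ereal \<bar>g x a - h x a\<bar>)" .
qed

lemma tb_supp: "f \<in> F \<Longrightarrow> x \<in> space d0 \<Longrightarrow> tb f x \<in> supp (\<pi>0 x)"
  using tb_max unfolding is_argmax_on_def by blast

lemma tb_ge: "f \<in> F \<Longrightarrow> x \<in> space d0 \<Longrightarrow> b \<in> supp (\<pi>0 x) \<Longrightarrow> f x b \<le> f x (tb f x)"
  using tb_max unfolding is_argmax_on_def by blast

lemma same_tb:
  assumes f: "f \<in> F" and f': "f' \<in> F" and d: "supp_dist d0 \<pi>0 f f' < ereal (\<Delta>/2)"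
  shows "AE x in d0. tb f' x = tb f x"
  using margin[OF f]
proof (rule AE_mp, intro AE_I2 impI)
  fix x assume x: "x \<in> space d0"
    and m: "\<forall>b\<in>supp (\<pi>0 x). b \<noteq> tb f x \<longrightarrow> f x b \<le> f x (tb f x) - \<Delta>"
  show "tb f' x = tb f x"
  proof (rule ccontr)
    assume ne: "tb f' x \<noteq> tb f x"
    let ?a = "tb f x" and ?a' = "tb f' x"
    have a: "?a \<in> supp (\<pi>0 x)" and a': "?a' \<in> supp (\<pi>0 x)" using tb_supp f f' x by auto
    have 1: "f x ?a' \<le> f x ?a - \<Delta>" using m a' ne by auto
    have 2: "f' x ?a \<le> f' x ?a'" using tb_ge[OF f' x a] .
    have 3: "\<bar>f x ?a - f' x ?a\<bar> < \<Delta>/2" using dist_lt[OF d x a] .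
    have 4: "\<bar>f x ?a' - f' x ?a'\<bar> < \<Delta>/2" using dist_lt[OF d x a'] .
    show False using 1 2 3 4 unfolding abs_less_iff by linarith
  qed
qed

lemma gap_meas:
  assumes f: "f \<in> F" and g: "g \<in> F"
  shows "(\<lambda>x. f x (tb g x)) \<in> borel_measurable d0"
proof -
  have [measurable]: "(\<lambda>(x, a). f x a) \<in> borel_measurable (d0 \<Otimes>\<^sub>M borel)"
    using meas[OF f] unfolding is_reward_def .
  have [measurable]: "tb g \<in> d0 \<rightarrow>\<^sub>M borel" using tb_meas[OF g] .
  have "(\<lambda>x. (x, tb g x)) \<in> d0 \<rightarrow>\<^sub>M (d0 \<Otimes>\<^sub>M borel)" by measurable
  from measurable_compose[OF this \<open>(\<lambda>(x, a). f x a) \<in> _\<close>] show ?thesis by simp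
qed

lemma gap_close:
  assumes f: "f \<in> F" and g: "g \<in> F" and f': "f' \<in> F" and g': "g' \<in> F"
    and r: "r \<le> \<Delta>/2"
    and df: "supp_dist d0 \<pi>0 f f' < ereal r" and dg: "supp_dist d0 \<pi>0 g g' < ereal r"
  shows "subopt_gap d0 tb f' g' \<le> subopt_gap d0 tb f g + ennreal (2*r)"
proof -
  have df2: "supp_dist d0 \<pi>0 f f' < ereal (\<Delta>/2)" using df r by (meson ereal_less_eq(3) order_less_le_trans)
  have dg2: "supp_dist d0 \<pi>0 g g' < ereal (\<Delta>/2)" using dg r by (meson ereal_less_eq(3) order_less_le_trans)
  have e: "AE x in d0. tb f' x = tb f x \<and> tb g' x = tb g x"
    using same_tb[OF f f' df2] same_tb[OF g g' dg2] by eventually_elim auto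
  have ae: "AE x in d0. ennreal (f' x (tb f' x) - f' x (tb g' x)) \<le> ennreal (f x (tb f x) - f x (tb g x)) + ennreal (2*r)"
    using e
  proof (rule AE_mp, intro AE_I2 impI)
    fix x assume x: "x \<in> space d0" and elim: "tb f' x = tb f x \<and> tb g' x = tb g x"
    have a: "tb f x \<in> supp (\<pi>0 x)" and b: "tb g x \<in> supp (\<pi>0 x)" using tb_supp f g x by auto
    have 1: "\<bar>f x (tb f x) - f' x (tb f x)\<bar> < r" using dist_lt[OF df x a] .
    have 2: "\<bar>f x (tb g x) - f' x (tb g x)\<bar> < r" using dist_lt[OF df x b] .
    have nn: "0 \<le> f x (tb f x) - f x (tb g x)" using tb_ge[OF f x b] by simp
    have "f' x (tb f' x) - f' x (tb g' x) \<le> (f x (tb f x) - f x (tb g x)) + 2*r"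
      using elim 1 2 unfolding abs_less_iff by auto
    then have "ennreal (f' x (tb f' x) - f' x (tb g' x)) \<le> ennreal ((f x (tb f x) - f x (tb g x)) + 2*r)"
      by (rule ennreal_leI)
    also have "\<dots> = ennreal (f x (tb f x) - f x (tb g x)) + ennreal (2*r)"
      using nn 1 by (intro ennreal_plus) auto
    finally show "ennreal (f' x (tb f' x) - f' x (tb g' x)) \<le> ennreal (f x (tb f x) - f x (tb g x)) + ennreal (2*r)" .
  qed
  have [measurable]: "(\<lambda>x. f x (tb f x)) \<in> borel_measurable d0" "(\<lambda>x. f x (tb g x)) \<in> borel_measurable d0"
    using gap_meas f g by auto
  have "subopt_gap d0 tb f' g' \<le> (\<integral>\<^sup>+ x. ennreal (f x (tb f x) - f x (tb g x)) + ennreal (2*r) \<partial>d0)"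
    unfolding subopt_gap_def by (rule nn_integral_mono_AE[OF ae])
  also have "\<dots> = subopt_gap d0 tb f g + (\<integral>\<^sup>+ x. ennreal (2*r) \<partial>d0)"
    unfolding subopt_gap_def by (rule nn_integral_add) auto
  also have "(\<integral>\<^sup>+ x. ennreal (2*r) \<partial>d0) = ennreal (2*r)"
    using prob_space.emeasure_space_1[OF d0] by simp
  finally show ?thesis .
qed

end



context L3 begin

lemma sets_PiM_x: "x \<in> space d0 \<Longrightarrow> sets (PiM {..<K} (\<lambda>_. \<pi>0 x)) = sets (PiM {..<K} (\<lambda>_. (borel::'a measure)))"
  using sp by (intro sets_PiM_cong) auto

lemma SS_sec_meas:
  assumes f: "f \<in> F" and g: "g \<in> F" and x: "x \<in> space d0"
  shows "(\<lambda>A. ennreal (SS K (\<lambda>i. f x (A i)) (\<lambda>i. g x (A i)))) \<in> borel_measurable (PiM {..<K} (\<lambda>_. \<pi>0 x))"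
proof -
  have "(\<lambda>A. ennreal (SS K (\<lambda>i. f x (A i)) (\<lambda>i. g x (A i)))) \<in> borel_measurable (PiM {..<K} (\<lambda>_. borel))"
    using measurable_Pair2[OF SS_joint_meas[OF f g] x] by simp
  then show ?thesis by (subst measurable_cong_sets[OF sets_PiM_x[OF x] refl])
qed

lemma II_bound:
  assumes x: "x \<in> space d0"
  shows "II f f x \<le> ennreal (ln K)"
proof -
  interpret P: prob_space "PiM {..<K} (\<lambda>_. \<pi>0 x)" using prob_PiM[OF x] .
  have "II f f x \<le> (\<integral>\<^sup>+ A. ennreal (ln K) \<partial>(PiM {..<K} (\<lambda>_. \<pi>0 x)))"
    unfolding II_def by (intro nn_integral_mono ennreal_leI SS_le_lnK K0)
  also have "\<dots> = ennreal (ln K)" using P.emeasure_space_1 by simp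
  finally show ?thesis .
qed

lemma L_bound: "pref_loss d0 \<pi>0 K f f \<le> ennreal (ln K)"
proof -
  have "pref_loss d0 \<pi>0 K f f \<le> (\<integral>\<^sup>+ x. ennreal (ln K) \<partial>d0)"
    unfolding pref_loss_eq by (intro nn_integral_mono II_bound)
  also have "\<dots> = ennreal (ln K)" using prob_space.emeasure_space_1[OF d0] by simp
  finally show ?thesis .
qed

lemma II_gibbs: "II f f x \<le> II f g x"
  unfolding II_def by (intro nn_integral_mono ennreal_leI gibbs K0)

lemma L_gibbs: "pref_loss d0 \<pi>0 K f f \<le> pref_loss d0 \<pi>0 K f g"
  unfolding pref_loss_eq by (intro nn_integral_mono II_gibbs)

lemma II_perturb:
  assumes f: "f \<in> F" and g: "g \<in> F" and f': "f' \<in> F" and g': "g' \<in> F" and x: "x \<in> space d0"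
    and r: "r \<ge> 0"
    and df: "supp_dist d0 \<pi>0 f f' < ereal r" and dg: "supp_dist d0 \<pi>0 g g' < ereal r"
  shows "ennreal (exp (-2*r)) * II f g x \<le> II f' g' x + ennreal (2*r)"
    and "II f' g' x \<le> ennreal (exp (2*r)) * II f g x + ennreal (2*r)"
proof -
  interpret P: prob_space "PiM {..<K} (\<lambda>_. \<pi>0 x)" using prob_PiM[OF x] .
  let ?M = "PiM {..<K} (\<lambda>_. \<pi>0 x)"
  let ?S = "\<lambda>A. SS K (\<lambda>i. f x (A i)) (\<lambda>i. g x (A i))"
  let ?S' = "\<lambda>A. SS K (\<lambda>i. f' x (A i)) (\<lambda>i. g' x (A i))"
  have ae: "AE A in ?M. \<forall>i\<in>{..<K}. A i \<in> supp (\<pi>0 x)"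
    using AE_PiM_supp[OF sp[OF x]] .
  have pt: "exp (-2*r) * ?S A \<le> ?S' A + 2*r \<and> ?S' A \<le> exp (2*r) * ?S A + 2*r"
    if A: "\<forall>i\<in>{..<K}. A i \<in> supp (\<pi>0 x)" for A
  proof -
    have hv: "\<bar>f' x (A k) - f x (A k)\<bar> \<le> r" if "k < K" for k
      using dist_lt[OF df x, of "A k"] A that by (simp add: abs_minus_commute)
    have hw: "\<bar>g' x (A k) - g x (A k)\<bar> \<le> r" if "k < K" for k
      using dist_lt[OF dg x, of "A k"] A that by (simp add: abs_minus_commute)
    show ?thesis using SS_perturb[OF K0 r hv hw] by auto
  qed
  have m1: "(\<lambda>A. ennreal (?S A)) \<in> borel_measurable ?M" by (rule SS_sec_meas[OF f g x])
  have m2: "(\<lambda>A. ennreal (?S' A)) \<in> borel_measurable ?M" by (rule SS_sec_meas[OF f' g' x])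
  have "ennreal (exp (-2*r)) * II f g x = (\<integral>\<^sup>+ A. ennreal (exp (-2*r)) * ennreal (?S A) \<partial>?M)"
    unfolding II_def using m1 by (rule nn_integral_cmult[symmetric])
  also have "\<dots> \<le> (\<integral>\<^sup>+ A. ennreal (?S' A) + ennreal (2*r) \<partial>?M)"
  proof (rule nn_integral_mono_AE)
    show "AE A in ?M. ennreal (exp (-2*r)) * ennreal (?S A) \<le> ennreal (?S' A) + ennreal (2*r)"
    using ae
  proof (eventually_elim)
    case (elim A)
    have "ennreal (exp (-2*r)) * ennreal (?S A) = ennreal (exp (-2*r) * ?S A)"
      by (rule ennreal_mult[symmetric]) (auto intro: SS_nonneg)
    also have "\<dots> \<le> ennreal (?S' A + 2*r)" using pt[OF elim] by (intro ennreal_leI) auto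
    also have "\<dots> = ennreal (?S' A) + ennreal (2*r)" using SS_nonneg r by (intro ennreal_plus) auto
    finally show ?case .
  qed
  qed
  also have "\<dots> = II f' g' x + ennreal (2*r)"
    unfolding II_def using m2 P.emeasure_space_1 by (subst nn_integral_add) auto
  finally show "ennreal (exp (-2*r)) * II f g x \<le> II f' g' x + ennreal (2*r)" .
  have "II f' g' x \<le> (\<integral>\<^sup>+ A. ennreal (exp (2*r)) * ennreal (?S A) + ennreal (2*r) \<partial>?M)"
    unfolding II_def
  proof (rule nn_integral_mono_AE)
    show "AE A in ?M. ennreal (?S' A) \<le> ennreal (exp (2*r)) * ennreal (?S A) + ennreal (2*r)"
    using ae
  proof (eventually_elim)
    case (elim A)
    have "ennreal (?S' A) \<le> ennreal (exp (2*r) * ?S A + 2*r)" using pt[OF elim] by (intro ennreal_leI) auto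
    also have "\<dots> = ennreal (exp (2*r)) * ennreal (?S A) + ennreal (2*r)"
      using SS_nonneg r by (simp add: ennreal_plus ennreal_mult)
    finally show ?case .
  qed
  qed
  also have "\<dots> = ennreal (exp (2*r)) * II f g x + ennreal (2*r)"
    unfolding II_def using m1 P.emeasure_space_1 by (subst nn_integral_add) (auto simp: nn_integral_cmult)
  finally show "II f' g' x \<le> ennreal (exp (2*r)) * II f g x + ennreal (2*r)" .
qed

lemma L_perturb:
  assumes f: "f \<in> F" and g: "g \<in> F" and f': "f' \<in> F" and g': "g' \<in> F"
    and r: "r \<ge> 0"
    and df: "supp_dist d0 \<pi>0 f f' < ereal r" and dg: "supp_dist d0 \<pi>0 g g' < ereal r"
  shows "ennreal (exp (-2*r)) * pref_loss d0 \<pi>0 K f g \<le> pref_loss d0 \<pi>0 K f' g' + ennreal (2*r)"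
    and "pref_loss d0 \<pi>0 K f' g' \<le> ennreal (exp (2*r)) * pref_loss d0 \<pi>0 K f g + ennreal (2*r)"
proof -
  have m1: "II f g \<in> borel_measurable d0" by (rule II_meas[OF f g])
  have m2: "II f' g' \<in> borel_measurable d0" by (rule II_meas[OF f' g'])
  have e1: "(\<integral>\<^sup>+ x. ennreal (2*r) \<partial>d0) = ennreal (2*r)" using prob_space.emeasure_space_1[OF d0] by simp
  have "ennreal (exp (-2*r)) * pref_loss d0 \<pi>0 K f g = (\<integral>\<^sup>+ x. ennreal (exp (-2*r)) * II f g x \<partial>d0)"
    unfolding pref_loss_eq using m1 by (rule nn_integral_cmult[symmetric])
  also have "\<dots> \<le> (\<integral>\<^sup>+ x. II f' g' x + ennreal (2*r) \<partial>d0)"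
    using II_perturb(1)[OF f g f' g' _ r df dg] by (intro nn_integral_mono) auto
  also have "\<dots> = pref_loss d0 \<pi>0 K f' g' + ennreal (2*r)"
    unfolding pref_loss_eq using m2 e1 by (subst nn_integral_add) auto
  finally show "ennreal (exp (-2*r)) * pref_loss d0 \<pi>0 K f g \<le> pref_loss d0 \<pi>0 K f' g' + ennreal (2*r)" .
  have "pref_loss d0 \<pi>0 K f' g' \<le> (\<integral>\<^sup>+ x. ennreal (exp (2*r)) * II f g x + ennreal (2*r) \<partial>d0)"
    unfolding pref_loss_eq using II_perturb(2)[OF f g f' g' _ r df dg] by (intro nn_integral_mono) auto
  also have "\<dots> = ennreal (exp (2*r)) * pref_loss d0 \<pi>0 K f g + ennreal (2*r)"
    unfolding pref_loss_eq using m1 e1 by (subst nn_integral_add) (auto simp: nn_integral_cmult)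
  finally show "pref_loss d0 \<pi>0 K f' g' \<le> ennreal (exp (2*r)) * pref_loss d0 \<pi>0 K f g + ennreal (2*r)" .
qed

end



context L3 begin

lemma II_strict:
  assumes f: "f \<in> F" and g: "g \<in> F" and x: "x \<in> space d0"
    and ne: "tb f x \<noteq> tb g x"
    and mf: "\<forall>b\<in>supp (\<pi>0 x). b \<noteq> tb f x \<longrightarrow> f x b \<le> f x (tb f x) - \<Delta>"
    and mg: "\<forall>b\<in>supp (\<pi>0 x). b \<noteq> tb g x \<longrightarrow> g x b \<le> g x (tb g x) - \<Delta>"
    and cf: "continuous_on (supp (\<pi>0 x)) (f x)"
    and cg: "continuous_on (supp (\<pi>0 x)) (g x)"
  shows "II f f x < II f g x"
proof -
  let ?S = "supp (\<pi>0 x)"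
  let ?M = "PiM {..<K} (\<lambda>_. \<pi>0 x)"
  interpret P: prob_space ?M using prob_PiM[OF x] .
  define a where "a = tb f x"
  define b where "b = tb g x"
  define h where "h = (\<lambda>c. g x c - f x c)"
  have a: "a \<in> ?S" and b: "b \<in> ?S" unfolding a_def b_def using tb_supp f g x by auto
  have ab: "a \<noteq> b" using ne unfolding a_def b_def .
  have hab: "h b - h a \<ge> 2 * \<Delta>"
    using mf b ab mg a unfolding h_def a_def b_def by force
  have ch: "continuous_on ?S h" unfolding h_def using cf cg by (intro continuous_intros)
  obtain da where da: "da > 0" "\<forall>c\<in>?S. dist c a < da \<longrightarrow> dist (h c) (h a) < \<Delta>/2"
    using ch a Delta unfolding continuous_on_iff by (meson half_gt_zero)
  obtain db where db: "db > 0" "\<forall>c\<in>?S. dist c b < db \<longrightarrow> dist (h c) (h b) < \<Delta>/2"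
    using ch b Delta unfolding continuous_on_iff by (meson half_gt_zero)
  define E where "E = (\<lambda>i::nat. if i = 0 then ball a da else ball b db)"
  define B where "B = prod_emb {..<K} (\<lambda>_. \<pi>0 x) {0,1} (Pi\<^sub>E {0,1} E)"
  have J: "{0,1} \<subseteq> {..<K}" using K by auto
  have Esets: "E i \<in> sets (\<pi>0 x)" for i unfolding E_def using sp(1)[OF x] by auto
  have Bsets: "B \<in> sets ?M" unfolding B_def using J Esets by (intro sets_PiM_I) auto
  have posa: "emeasure (\<pi>0 x) (ball a da) > 0" using a da(1) unfolding supp_def by auto
  have posb: "emeasure (\<pi>0 x) (ball b db) > 0" using b db(1) unfolding supp_def by auto
  have "emeasure ?M B = (\<Prod>i\<in>{0,1}. emeasure (\<pi>0 x) (E i))"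
    unfolding B_def using J Esets sp(2)[OF x] by (intro emeasure_PiM_emb) auto
  also have "\<dots> = emeasure (\<pi>0 x) (ball a da) * emeasure (\<pi>0 x) (ball b db)"
    by (simp add: E_def)
  finally have Bpos: "emeasure ?M B > 0" using posa posb by (simp add: ennreal_zero_less_mult_iff)
  have inB: "A 0 \<in> ball a da \<and> A 1 \<in> ball b db" if "A \<in> B" for A
  proof -
    have "restrict A {0,1} \<in> Pi\<^sub>E {0,1} E" using that unfolding B_def prod_emb_iff by blast
    then have "A 0 \<in> E 0" "A 1 \<in> E 1" by (auto simp: PiE_iff)
    then show ?thesis by (simp add: E_def)
  qed
  let ?Sff = "\<lambda>A. SS K (\<lambda>i. f x (A i)) (\<lambda>i. f x (A i))"
  let ?Sfg = "\<lambda>A. SS K (\<lambda>i. f x (A i)) (\<lambda>i. g x (A i))"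
  have strict: "?Sff A < ?Sfg A" if A: "A \<in> B" "\<forall>i\<in>{..<K}. A i \<in> ?S" for A
  proof -
    have A0: "A 0 \<in> ?S" and A1: "A 1 \<in> ?S" using A(2) K by auto
    have "dist (A 0) a < da" "dist (A 1) b < db" using inB[OF A(1)] by (auto simp: dist_commute)
    then have "dist (h (A 0)) (h a) < \<Delta>/2" "dist (h (A 1)) (h b) < \<Delta>/2" using da db A0 A1 by auto
    then have "h (A 1) - h (A 0) > 0" using hab Delta unfolding dist_real_def abs_less_iff by linarith
    then have "h (A 0) \<noteq> h (A 1)" by auto
    then have "g x (A 0) - f x (A 0) \<noteq> g x (A 1) - f x (A 1)" unfolding h_def .
    then show ?thesis using K by (intro gibbs_strict[OF K0, of 0 1]) auto
  qed
  have "(\<integral>\<^sup>+ A. ennreal (?Sff A) \<partial>?M) < (\<integral>\<^sup>+ A. ennreal (?Sfg A) \<partial>?M)"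
  proof (rule nn_integral_less)
    show "(\<lambda>A. ennreal (?Sff A)) \<in> borel_measurable ?M" by (rule SS_sec_meas[OF f f x])
    show "(\<lambda>A. ennreal (?Sfg A)) \<in> borel_measurable ?M" by (rule SS_sec_meas[OF f g x])
    show "(\<integral>\<^sup>+ A. ennreal (?Sff A) \<partial>?M) \<noteq> \<infinity>"
      using II_bound[OF x, of f] unfolding II_def by (auto simp: top_unique)
    show "AE A in ?M. ennreal (?Sff A) \<le> ennreal (?Sfg A)"
      by (intro AE_I2 ennreal_leI gibbs K0)
    show "\<not> (AE A in ?M. ennreal (?Sfg A) \<le> ennreal (?Sff A))"
    proof
      assume ae: "AE A in ?M. ennreal (?Sfg A) \<le> ennreal (?Sff A)"
      have "AE A in ?M. A \<notin> B"
        using ae AE_PiM_supp[OF sp[OF x]]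
      proof eventually_elim
        case (elim A)
        show ?case
        proof
          assume "A \<in> B"
          then have "?Sff A < ?Sfg A" using strict elim(2) by auto
          then show False using elim(1) SS_nonneg[of K _ _] by (simp add: not_le)
        qed
      qed
      then have "emeasure ?M {A \<in> space ?M. A \<in> B} = 0" by (rule emeasure_eq_0_AE)
      moreover have "{A \<in> space ?M. A \<in> B} = B" using sets.sets_into_space[OF Bsets] by auto
      ultimately show False using Bpos by simp
    qed
  qed
  then show ?thesis unfolding II_def .
qed

end



context L3 begin

lemma L_strict:
  assumes f: "f \<in> F" and g: "g \<in> F" and gap: "subopt_gap d0 tb f g > 0"
  shows "pref_loss d0 \<pi>0 K f f < pref_loss d0 \<pi>0 K f g"
  unfolding pref_loss_eq
proof (rule nn_integral_less)
  show "II f f \<in> borel_measurable d0" by (rule II_meas[OF f f])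
  show "II f g \<in> borel_measurable d0" by (rule II_meas[OF f g])
  show "(\<integral>\<^sup>+ x. II f f x \<partial>d0) \<noteq> \<infinity>"
    using L_bound[of f] unfolding pref_loss_eq by (auto simp: top_unique)
  show "AE x in d0. II f f x \<le> II f g x" by (intro AE_I2 II_gibbs)
  show "\<not> (AE x in d0. II f g x \<le> II f f x)"
  proof
    assume ae: "AE x in d0. II f g x \<le> II f f x"
    have "AE x in d0. tb f x = tb g x"
      using ae margin[OF f] margin[OF g] cont[OF f] cont[OF g]
    proof (rule AE_mp[OF _ AE_mp[OF _ AE_mp[OF _ AE_mp[OF _ AE_mp[OF _ AE_I2]]]]], intro impI)
      fix x assume x: "x \<in> space d0" and h: "II f g x \<le> II f f x"
        and mf: "\<forall>b\<in>supp (\<pi>0 x). b \<noteq> tb f x \<longrightarrow> f x b \<le> f x (tb f x) - \<Delta>"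
        and mg: "\<forall>b\<in>supp (\<pi>0 x). b \<noteq> tb g x \<longrightarrow> g x b \<le> g x (tb g x) - \<Delta>"
        and cf: "continuous_on (supp (\<pi>0 x)) (f x)"
        and cg: "continuous_on (supp (\<pi>0 x)) (g x)"
      show "tb f x = tb g x"
      proof (rule ccontr)
        assume "tb f x \<noteq> tb g x"
        from II_strict[OF f g x this mf mg cf cg] h show False by simp
      qed
    qed
    then have "subopt_gap d0 tb f g = (\<integral>\<^sup>+ x. 0 \<partial>d0)"
      unfolding subopt_gap_def by (intro nn_integral_cong_AE) auto
    then show False using gap by simp
  qed
qed

end



lemma exists_r:
  fixes a \<delta> :: real
  assumes "\<delta> > 0"
  shows "\<exists>r>0. exp (2*r) * a + 2*r + \<delta>/2 + 2*r \<le> exp (-2*r) * (a + \<delta>)"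
proof -
  let ?phi = "\<lambda>r::real. exp (-2*r) * (a + \<delta>) - (exp (2*r) * a + 2*r + \<delta>/2 + 2*r)"
  have "(?phi \<longlongrightarrow> ?phi 0) (at_right 0)"
    by (intro tendsto_intros)
  moreover have "?phi 0 > 0" using assms by simp
  ultimately have "eventually (\<lambda>r. ?phi r > 0) (at_right 0)"
    by (rule order_tendstoD(1))
  then obtain b where b: "b > 0" "\<And>r. r > 0 \<Longrightarrow> r < b \<Longrightarrow> ?phi r > 0"
    unfolding eventually_at_right_field by auto
  then have "?phi (b/2) > 0" by (intro b(2)) auto
  then show ?thesis using b(1) by (intro exI[of _ "b/2"]) auto
qed

context L3 begin

lemma local_bound:
  assumes f: "f \<in> F" and g: "g \<in> F" and eps: "\<epsilon>0 > 0"
  shows "\<exists>r>0. \<exists>\<gamma>>0. \<forall>f'\<in>F. \<forall>g'\<in>F. supp_dist d0 \<pi>0 f f' < ereal r \<longrightarrow> supp_dist d0 \<pi>0 g g' < ereal r \<longrightarrow>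
           (ennreal \<epsilon>0 \<le> subopt_gap d0 tb f' g' \<longrightarrow> pref_loss d0 \<pi>0 K f' f' + ennreal \<gamma> \<le> pref_loss d0 \<pi>0 K f' g')"
proof (cases "subopt_gap d0 tb f g < ennreal \<epsilon>0")
  case True
  obtain t where t: "subopt_gap d0 tb f g = ennreal t" "0 \<le> t" "t < \<epsilon>0"
  proof (cases "subopt_gap d0 tb f g")
    case (real t) then show ?thesis using True by (intro that[of t]) (auto simp: ennreal_less_iff)
  next
    case top then show ?thesis using True by simp
  qed
  define r where "r = min (\<Delta>/2) ((\<epsilon>0 - t)/4)"
  have r4: "r \<le> (\<epsilon>0 - t)/4" unfolding r_def by (rule min.cobounded2)
  have r: "r > 0" "r \<le> \<Delta>/2" "t + 2*r < \<epsilon>0" using Delta t r4 unfolding r_def by auto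
  have main: "\<forall>f'\<in>F. \<forall>g'\<in>F. supp_dist d0 \<pi>0 f f' < ereal r \<longrightarrow> supp_dist d0 \<pi>0 g g' < ereal r \<longrightarrow>
           (ennreal \<epsilon>0 \<le> subopt_gap d0 tb f' g' \<longrightarrow> pref_loss d0 \<pi>0 K f' f' + ennreal 1 \<le> pref_loss d0 \<pi>0 K f' g')"
  proof (intro ballI impI)
    fix f' g' assume f': "f' \<in> F" and g': "g' \<in> F"
      and df: "supp_dist d0 \<pi>0 f f' < ereal r" and dg: "supp_dist d0 \<pi>0 g g' < ereal r"
      and ge: "ennreal \<epsilon>0 \<le> subopt_gap d0 tb f' g'"
    have "subopt_gap d0 tb f' g' \<le> ennreal t + ennreal (2*r)"
      using gap_close[OF f g f' g' r(2) df dg] t(1) by simp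
    also have "\<dots> = ennreal (t + 2*r)" using t r by (simp add: ennreal_plus)
    also have "\<dots> < ennreal \<epsilon>0" using r t by (subst ennreal_less_iff) auto
    finally show "pref_loss d0 \<pi>0 K f' f' + ennreal 1 \<le> pref_loss d0 \<pi>0 K f' g'" using ge by simp
  qed
  show ?thesis
    apply (rule exI[of _ r], rule conjI[OF r(1)], rule exI[of _ "1::real"], rule conjI)
     apply simp
    by (rule main)
next
  case False
  then have ge: "ennreal \<epsilon>0 \<le> subopt_gap d0 tb f g" by (simp add: not_less)
  have "ennreal \<epsilon>0 > 0" using eps by simp
  then have "subopt_gap d0 tb f g > 0" using ge by (rule order_less_le_trans)
  then have lt: "pref_loss d0 \<pi>0 K f f < pref_loss d0 \<pi>0 K f g" by (rule L_strict[OF f g])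
  obtain a where a: "pref_loss d0 \<pi>0 K f f = ennreal a" "0 \<le> a"
  proof (cases "pref_loss d0 \<pi>0 K f f")
    case (real a) then show ?thesis by (intro that) auto
  next
    case top then show ?thesis using L_bound[of f] by (simp add: top_unique)
  qed
  obtain \<delta> where \<delta>: "\<delta> > 0" "ennreal (a + \<delta>) \<le> pref_loss d0 \<pi>0 K f g"
  proof (cases "pref_loss d0 \<pi>0 K f g")
    case (real b)
    then have "a < b" using lt a by (simp add: ennreal_less_iff)
    then show ?thesis using real by (intro that[of "b - a"]) auto
  next
    case top
    then show ?thesis by (intro that[of 1]) auto
  qed
  obtain r where r: "r > 0" "exp (2*r) * a + 2*r + \<delta>/2 + 2*r \<le> exp (-2*r) * (a + \<delta>)"
    using exists_r[OF \<delta>(1), of a] by auto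
  have main: "\<forall>f'\<in>F. \<forall>g'\<in>F. supp_dist d0 \<pi>0 f f' < ereal r \<longrightarrow> supp_dist d0 \<pi>0 g g' < ereal r \<longrightarrow>
           (ennreal \<epsilon>0 \<le> subopt_gap d0 tb f' g' \<longrightarrow> pref_loss d0 \<pi>0 K f' f' + ennreal (\<delta>/2) \<le> pref_loss d0 \<pi>0 K f' g')"
  proof (intro ballI impI)
    fix f' g' assume f': "f' \<in> F" and g': "g' \<in> F"
      and df: "supp_dist d0 \<pi>0 f f' < ereal r" and dg: "supp_dist d0 \<pi>0 g g' < ereal r"
    define c where "c = exp (2*r) * a + 2*r + \<delta>/2"
    have c0: "c \<ge> 0" unfolding c_def using a \<delta> r by auto
    have 1: "ennreal (exp (-2*r)) * pref_loss d0 \<pi>0 K f g \<le> pref_loss d0 \<pi>0 K f' g' + ennreal (2*r)"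
      by (rule L_perturb(1)[OF f g f' g' _ df dg]) (use r in auto)
    have 2: "pref_loss d0 \<pi>0 K f' f' \<le> ennreal (exp (2*r)) * pref_loss d0 \<pi>0 K f f + ennreal (2*r)"
      by (rule L_perturb(2)[OF f f f' f' _ df df]) (use r in auto)
    have "ennreal (exp (-2*r) * (a + \<delta>)) = ennreal (exp (-2*r)) * ennreal (a + \<delta>)"
      using a \<delta> by (simp add: ennreal_mult)
    also have "\<dots> \<le> ennreal (exp (-2*r)) * pref_loss d0 \<pi>0 K f g"
      using \<delta>(2) by (rule mult_left_mono) simp
    finally have 3: "ennreal (exp (-2*r) * (a + \<delta>)) \<le> pref_loss d0 \<pi>0 K f' g' + ennreal (2*r)"
      using 1 by (rule order_trans)
    have 4: "ennreal c \<le> pref_loss d0 \<pi>0 K f' g'"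
    proof (cases "pref_loss d0 \<pi>0 K f' g'")
      case (real y)
      then have "ennreal (exp (-2*r) * (a + \<delta>)) \<le> ennreal (y + 2*r)"
        using 3 r by (simp add: ennreal_plus)
      then have "exp (-2*r) * (a + \<delta>) \<le> y + 2*r"
        using real r by (subst (asm) ennreal_le_iff) auto
      then have "c \<le> y" using r(2) unfolding c_def by linarith
      then show ?thesis using real by simp
    qed simp
    have "pref_loss d0 \<pi>0 K f' f' + ennreal (\<delta>/2) \<le> ennreal (exp (2*r) * a + 2*r) + ennreal (\<delta>/2)"
      using 2 a r by (intro add_right_mono) (simp add: ennreal_mult ennreal_plus)
    also have "\<dots> = ennreal c" unfolding c_def using a r \<delta> by (simp add: ennreal_plus)
    finally show "pref_loss d0 \<pi>0 K f' f' + ennreal (\<delta>/2) \<le> pref_loss d0 \<pi>0 K f' g'"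
      using 4 by (rule order_trans)
  qed
  show ?thesis
    apply (rule exI[of _ r], rule conjI[OF r(1)], rule exI[of _ "\<delta>/2"], rule conjI)
     apply (simp add: \<delta>(1))
    by (rule main)
qed

end



context L3 begin

lemma dist_nonneg: "0 \<le> supp_dist d0 \<pi>0 f g"
proof -
  obtain x where x: "x \<in> space d0" using prob_space.not_empty[OF d0] by auto
  have "supp (\<pi>0 x) \<noteq> {}"
  proof
    assume e: "supp (\<pi>0 x) = {}"
    have "- supp (\<pi>0 x) \<in> null_sets (\<pi>0 x)" using supp_null[OF sp(1)[OF x]] .
    then have "emeasure (\<pi>0 x) UNIV = 0" using e by auto
    moreover have "space (\<pi>0 x) = UNIV" using sets_eq_imp_space_eq[OF sp(1)[OF x]] by simp
    ultimately show False using prob_space.emeasure_space_1[OF sp(2)[OF x]] by simp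
  qed
  then obtain a where a: "a \<in> supp (\<pi>0 x)" by auto
  have "ereal \<bar>f x a - g x a\<bar> \<le> (SUP a\<in>supp (\<pi>0 x). ereal \<bar>f x a - g x a\<bar>)"
    using a by (rule SUP_upper)
  also have "\<dots> \<le> supp_dist d0 \<pi>0 f g"
    unfolding supp_dist_def using x by (rule SUP_upper)
  finally show ?thesis by (rule order_trans[rotated]) simp
qed

lemma dist_self: "supp_dist d0 \<pi>0 f f \<le> 0"
  unfolding supp_dist_def by (intro SUP_least) (simp add: zero_ereal_def)

lemma ball_open: "supp_open d0 \<pi>0 {h. supp_dist d0 \<pi>0 f h < ereal r}"
  unfolding supp_open_def
proof (intro ballI)
  fix h assume "h \<in> {h. supp_dist d0 \<pi>0 f h < ereal r}"
  then have lt: "supp_dist d0 \<pi>0 f h < ereal r" by simp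
  obtain e0 where e0: "supp_dist d0 \<pi>0 f h = ereal e0" "0 \<le> e0" "e0 < r"
    using lt dist_nonneg[of f h] by (cases "supp_dist d0 \<pi>0 f h") auto
  show "\<exists>e>0. \<forall>g. supp_dist d0 \<pi>0 h g < ereal e \<longrightarrow> g \<in> {h. supp_dist d0 \<pi>0 f h < ereal r}"
  proof (intro exI[of _ "r - e0"] conjI allI impI)
    show "r - e0 > 0" using e0 by simp
    fix g assume hg: "supp_dist d0 \<pi>0 h g < ereal (r - e0)"
    obtain t where t: "supp_dist d0 \<pi>0 h g = ereal t" "t < r - e0"
      using hg dist_nonneg[of h g] by (cases "supp_dist d0 \<pi>0 h g") auto
    have "supp_dist d0 \<pi>0 f g \<le> supp_dist d0 \<pi>0 f h + supp_dist d0 \<pi>0 h g" by (rule dist_triangle)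
    also have "\<dots> = ereal (e0 + t)" using e0 t by simp
    also have "\<dots> < ereal r" using t by simp
    finally show "g \<in> {h. supp_dist d0 \<pi>0 f h < ereal r}" by simp
  qed
qed

lemma finite_cover:
  assumes comp: "supp_compact d0 \<pi>0 F"
    and R: "\<And>g. g \<in> F \<Longrightarrow> R g > 0"
  obtains G where "G \<subseteq> F" "finite G" "\<forall>h\<in>F. \<exists>g\<in>G. supp_dist d0 \<pi>0 g h < ereal (R g)"
proof -
  let ?U = "(\<lambda>g. {h. supp_dist d0 \<pi>0 g h < ereal (R g)}) ` F"
  have "(\<forall>U\<in>?U. supp_open d0 \<pi>0 U) \<and> F \<subseteq> \<Union>?U"
  proof
    show "\<forall>U\<in>?U. supp_open d0 \<pi>0 U" using ball_open by auto
    show "F \<subseteq> \<Union>?U"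
    proof
      fix g assume g: "g \<in> F"
      have "supp_dist d0 \<pi>0 g g < ereal (R g)" using dist_self[of g] R[OF g]
        by (meson ereal_less(2) order_le_less_trans)
      then show "g \<in> \<Union>?U" using g by auto
    qed
  qed
  then obtain V where V: "V \<subseteq> ?U" "finite V" "F \<subseteq> \<Union>V" using comp unfolding supp_compact_def by meson
  obtain G where G: "G \<subseteq> F" "finite G" "V = (\<lambda>g. {h. supp_dist d0 \<pi>0 g h < ereal (R g)}) ` G"
    using finite_subset_image[OF V(2,1)] by blast
  show ?thesis
  proof (rule that[OF G(1,2)], intro ballI)
    fix h assume "h \<in> F"
    then show "\<exists>g\<in>G. supp_dist d0 \<pi>0 g h < ereal (R g)" using V(3) G(3) by auto
  qed
qed

lemma Min_pos:
  fixes c :: "'b \<Rightarrow> real"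
  assumes "finite G" "\<And>g. g \<in> G \<Longrightarrow> c g > 0"
  shows "Min (insert 1 (c ` G)) > 0" "\<And>g. g \<in> G \<Longrightarrow> Min (insert 1 (c ` G)) \<le> c g"
  using assms by (auto simp: Min_gr_iff)

lemma uniform:
  assumes comp: "supp_compact d0 \<pi>0 F" and eps: "\<epsilon>0 > 0"
  shows "\<exists>\<gamma>>0. \<forall>f'\<in>F. \<forall>g'\<in>F. ennreal \<epsilon>0 \<le> subopt_gap d0 tb f' g' \<longrightarrow>
            pref_loss d0 \<pi>0 K f' f' + ennreal \<gamma> \<le> pref_loss d0 \<pi>0 K f' g'"
proof -
  define Q where "Q = (\<lambda>f' g' (\<gamma>::real). ennreal \<epsilon>0 \<le> subopt_gap d0 tb f' g' \<longrightarrow>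
            pref_loss d0 \<pi>0 K f' f' + ennreal \<gamma> \<le> pref_loss d0 \<pi>0 K f' g')"
  have mono: "Q f' g' \<gamma>'" if "Q f' g' \<gamma>" "\<gamma>' \<le> \<gamma>" for f' g' \<gamma> \<gamma>'
  proof -
    have "ennreal \<gamma>' \<le> ennreal \<gamma>" using that(2) by (rule ennreal_leI)
    then have "pref_loss d0 \<pi>0 K f' f' + ennreal \<gamma>' \<le> pref_loss d0 \<pi>0 K f' f' + ennreal \<gamma>"
      by (rule add_left_mono)
    then show ?thesis using that(1) unfolding Q_def by (meson order_trans)
  qed
  have ex: "\<exists>rg::real\<times>real. fst p \<in> F \<longrightarrow> snd p \<in> F \<longrightarrow> (fst rg > 0 \<and> snd rg > 0 \<and>
      (\<forall>f'\<in>F. \<forall>g'\<in>F. supp_dist d0 \<pi>0 (fst p) f' < ereal (fst rg) \<longrightarrow> supp_dist d0 \<pi>0 (snd p) g' < ereal (fst rg) \<longrightarrow> Q f' g' (snd rg)))" for p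
  proof (cases "fst p \<in> F \<and> snd p \<in> F")
    case True
    then obtain r \<gamma> where "r > 0" "\<gamma> > 0" "\<forall>f'\<in>F. \<forall>g'\<in>F. supp_dist d0 \<pi>0 (fst p) f' < ereal r \<longrightarrow> supp_dist d0 \<pi>0 (snd p) g' < ereal r \<longrightarrow> Q f' g' \<gamma>"
      using local_bound[of "fst p" "snd p" \<epsilon>0] eps unfolding Q_def by blast
    then show ?thesis by (intro exI[of _ "(r, \<gamma>)"]) auto
  qed auto
  have "\<forall>p. \<exists>rg::real\<times>real. fst p \<in> F \<longrightarrow> snd p \<in> F \<longrightarrow> (fst rg > 0 \<and> snd rg > 0 \<and>
      (\<forall>f'\<in>F. \<forall>g'\<in>F. supp_dist d0 \<pi>0 (fst p) f' < ereal (fst rg) \<longrightarrow> supp_dist d0 \<pi>0 (snd p) g' < ereal (fst rg) \<longrightarrow> Q f' g' (snd rg)))"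
    using ex by blast
  then have "\<exists>c. \<forall>p. fst p \<in> F \<longrightarrow> snd p \<in> F \<longrightarrow> (fst (c p) > 0 \<and> snd (c p) > 0 \<and>
      (\<forall>f'\<in>F. \<forall>g'\<in>F. supp_dist d0 \<pi>0 (fst p) f' < ereal (fst (c p)) \<longrightarrow> supp_dist d0 \<pi>0 (snd p) g' < ereal (fst (c p)) \<longrightarrow> Q f' g' (snd (c p))))"
    by (rule choice)
  then obtain c where c: "\<And>p. fst p \<in> F \<longrightarrow> snd p \<in> F \<longrightarrow> (fst (c p) > 0 \<and> snd (c p) > 0 \<and>
      (\<forall>f'\<in>F. \<forall>g'\<in>F. supp_dist d0 \<pi>0 (fst p) f' < ereal (fst (c p)) \<longrightarrow> supp_dist d0 \<pi>0 (snd p) g' < ereal (fst (c p)) \<longrightarrow> Q f' g' (snd (c p))))"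
    by blast
  define RR where "RR = (\<lambda>f g. fst (c (f, g)))"
  define GG where "GG = (\<lambda>f g. snd (c (f, g)))"
  have RG: "RR f g > 0" "GG f g > 0"
    "\<And>f' g'. f' \<in> F \<Longrightarrow> g' \<in> F \<Longrightarrow> supp_dist d0 \<pi>0 f f' < ereal (RR f g) \<Longrightarrow> supp_dist d0 \<pi>0 g g' < ereal (RR f g) \<Longrightarrow> Q f' g' (GG f g)"
    if "f \<in> F" "g \<in> F" for f g
    using c[of "(f, g)"] that unfolding RR_def GG_def by auto
  have step1: "\<exists>R\<gamma>::real\<times>real. f \<in> F \<longrightarrow> (fst R\<gamma> > 0 \<and> snd R\<gamma> > 0 \<and>
      (\<forall>f'\<in>F. supp_dist d0 \<pi>0 f f' < ereal (fst R\<gamma>) \<longrightarrow> (\<forall>g'\<in>F. Q f' g' (snd R\<gamma>))))" for f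
  proof (cases "f \<in> F")
    case f: True
    obtain G where G: "G \<subseteq> F" "finite G" "\<forall>h\<in>F. \<exists>g\<in>G. supp_dist d0 \<pi>0 g h < ereal (RR f g)"
      using finite_cover[OF comp, of "RR f"] RG(1)[OF f] by blast
    define R where "R = Min (insert 1 (RR f ` G))"
    define \<Gamma> where "\<Gamma> = Min (insert 1 (GG f ` G))"
    have R: "R > 0" "\<And>g. g \<in> G \<Longrightarrow> R \<le> RR f g"
      unfolding R_def using Min_pos[OF G(2), of "RR f"] RG(1)[OF f] G(1) by auto
    have \<Gamma>: "\<Gamma> > 0" "\<And>g. g \<in> G \<Longrightarrow> \<Gamma> \<le> GG f g"
      unfolding \<Gamma>_def using Min_pos[OF G(2), of "GG f"] RG(2)[OF f] G(1) by auto
    have "\<forall>f'\<in>F. supp_dist d0 \<pi>0 f f' < ereal R \<longrightarrow> (\<forall>g'\<in>F. Q f' g' \<Gamma>)"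
    proof (intro ballI impI)
      fix f' g' assume f': "f' \<in> F" and df: "supp_dist d0 \<pi>0 f f' < ereal R" and g': "g' \<in> F"
      obtain g where g: "g \<in> G" "supp_dist d0 \<pi>0 g g' < ereal (RR f g)" using G(3) g' by blast
      have "supp_dist d0 \<pi>0 f f' < ereal (RR f g)"
        using df R(2)[OF g(1)] by (meson ereal_less_eq(3) order_less_le_trans)
      then have "Q f' g' (GG f g)" using RG(3)[OF f _ f' g'] g G(1) by auto
      then show "Q f' g' \<Gamma>" using mono \<Gamma>(2)[OF g(1)] by blast
    qed
    then show ?thesis using R(1) \<Gamma>(1) by (intro exI[of _ "(R, \<Gamma>)"]) auto
  qed auto
  have "\<forall>f. \<exists>R\<gamma>::real\<times>real. f \<in> F \<longrightarrow> (fst R\<gamma> > 0 \<and> snd R\<gamma> > 0 \<and>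
      (\<forall>f'\<in>F. supp_dist d0 \<pi>0 f f' < ereal (fst R\<gamma>) \<longrightarrow> (\<forall>g'\<in>F. Q f' g' (snd R\<gamma>))))"
    using step1 by blast
  then have "\<exists>c2. \<forall>f. f \<in> F \<longrightarrow> (fst (c2 f) > 0 \<and> snd (c2 f) > 0 \<and>
      (\<forall>f'\<in>F. supp_dist d0 \<pi>0 f f' < ereal (fst (c2 f)) \<longrightarrow> (\<forall>g'\<in>F. Q f' g' (snd (c2 f)))))"
    by (rule choice)
  then obtain c2 where c2: "\<And>f. f \<in> F \<longrightarrow> (fst (c2 f) > 0 \<and> snd (c2 f) > 0 \<and>
      (\<forall>f'\<in>F. supp_dist d0 \<pi>0 f f' < ereal (fst (c2 f)) \<longrightarrow> (\<forall>g'\<in>F. Q f' g' (snd (c2 f)))))"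
    by blast
  obtain G2 where G2: "G2 \<subseteq> F" "finite G2" "\<forall>h\<in>F. \<exists>f\<in>G2. supp_dist d0 \<pi>0 f h < ereal (fst (c2 f))"
    using finite_cover[OF comp, of "\<lambda>f. fst (c2 f)"] c2 by blast
  define \<gamma> where "\<gamma> = Min (insert 1 ((\<lambda>f. snd (c2 f)) ` G2))"
  have \<gamma>: "\<gamma> > 0" "\<And>f. f \<in> G2 \<Longrightarrow> \<gamma> \<le> snd (c2 f)"
    unfolding \<gamma>_def using Min_pos[OF G2(2), of "\<lambda>f. snd (c2 f)"] c2 G2(1) by auto
  have "\<forall>f'\<in>F. \<forall>g'\<in>F. Q f' g' \<gamma>"
  proof (intro ballI)
    fix f' g' assume f': "f' \<in> F" and g': "g' \<in> F"
    obtain f where f: "f \<in> G2" "supp_dist d0 \<pi>0 f f' < ereal (fst (c2 f))" using G2(3) f' by blast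
    have "Q f' g' (snd (c2 f))" using c2[of f] f G2(1) f' g' by auto
    then show "Q f' g' \<gamma>" using mono \<gamma>(2)[OF f(1)] by blast
  qed
  then show ?thesis using \<gamma>(1) unfolding Q_def by blast
qed

end

theorem lemma3:
  fixes d0 :: "'x measure"
    and \<pi>0 :: "'x \<Rightarrow> 'a::{metric_space, second_countable_topology} measure"
    and \<P> :: "'p set"
    and Rp :: "'p \<Rightarrow> 'x \<Rightarrow> 'a \<Rightarrow> real"
    and tb :: "('x \<Rightarrow> 'a \<Rightarrow> real) \<Rightarrow> 'x \<Rightarrow> 'a"
    and K :: nat
    and \<epsilon>0 :: real
  assumes d0: "prob_space d0"
    and kernel: "\<pi>0 \<in> d0 \<rightarrow>\<^sub>M prob_algebra borel"
    and rewards: "\<forall>p\<in>\<P>. is_reward d0 (Rp p) \<and> centered d0 \<pi>0 (Rp p)"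
    and tiebreak: "\<forall>R\<in>Rp ` \<P>. tb R \<in> d0 \<rightarrow>\<^sub>M borel \<and>
                     (\<forall>x\<in>space d0. is_argmax_on (supp (\<pi>0 x)) (R x) (tb R x))"
    and C1_compact: "supp_compact d0 \<pi>0 (Rp ` \<P>)"
    and C1_cont: "\<forall>R\<in>Rp ` \<P>. AE x in d0. continuous_on (supp (\<pi>0 x)) (R x)"
    and C2: "\<exists>\<Delta>>0. \<forall>p\<in>\<P>. AE x in d0.
               (\<forall>b\<in>supp (\<pi>0 x). b \<noteq> tb (Rp p) x \<longrightarrow>
                   Rp p x b \<le> Rp p x (tb (Rp p) x) - \<Delta>)"
    and K: "K \<ge> 2"
    and eps: "\<epsilon>0 > 0"
  shows "\<exists>\<gamma>>0. \<forall>p\<in>\<P>. \<forall>q\<in>\<P>.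
           subopt_gap d0 tb (Rp p) (Rp q) \<ge> ennreal \<epsilon>0 \<longrightarrow>
           pref_loss d0 \<pi>0 K (Rp p) (Rp q) \<ge> pref_loss d0 \<pi>0 K (Rp p) (Rp p) + ennreal \<gamma>"
proof -
  obtain \<Delta> where \<Delta>: "\<Delta> > 0" "\<forall>p\<in>\<P>. AE x in d0.
               (\<forall>b\<in>supp (\<pi>0 x). b \<noteq> tb (Rp p) x \<longrightarrow>
                   Rp p x b \<le> Rp p x (tb (Rp p) x) - \<Delta>)"
    using C2 by blast
  interpret L: L3 d0 \<pi>0 "Rp ` \<P>" tb K \<Delta>
  proof (rule L3.intro)
    show "prob_space d0" by (rule d0)
    show "\<pi>0 \<in> d0 \<rightarrow>\<^sub>M prob_algebra borel" by (rule kernel)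
    show "\<Delta> > 0" by (rule \<Delta>(1))
    show "K \<ge> 2" by (rule K)
  next
    fix f assume "f \<in> Rp ` \<P>"
    then show "is_reward d0 f" using rewards by auto
  next
    fix f assume "f \<in> Rp ` \<P>"
    then show "tb f \<in> d0 \<rightarrow>\<^sub>M borel" using tiebreak by auto
  next
    fix f x assume "f \<in> Rp ` \<P>" "x \<in> space d0"
    then show "is_argmax_on (supp (\<pi>0 x)) (f x) (tb f x)" using tiebreak by auto
  next
    fix f assume "f \<in> Rp ` \<P>"
    then show "AE x in d0. continuous_on (supp (\<pi>0 x)) (f x)" using C1_cont by auto
  next
    fix f assume "f \<in> Rp ` \<P>"
    then show "AE x in d0. (\<forall>b\<in>supp (\<pi>0 x). b \<noteq> tb f x \<longrightarrow> f x b \<le> f x (tb f x) - \<Delta>)"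
      using \<Delta>(2) by auto
  qed
  obtain \<gamma> where \<gamma>: "\<gamma> > 0" "\<forall>f'\<in>Rp ` \<P>. \<forall>g'\<in>Rp ` \<P>. ennreal \<epsilon>0 \<le> subopt_gap d0 tb f' g' \<longrightarrow>
            pref_loss d0 \<pi>0 K f' f' + ennreal \<gamma> \<le> pref_loss d0 \<pi>0 K f' g'"
    using L.uniform[OF C1_compact eps] by blast
  show ?thesis using \<gamma> by blast
qed

end
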